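(* Let $G=(V,E)$ be a finite undirected graph with $V=\{1,\dots,n\}$, and let $A,B,C\subseteq V$ be nonempty pairwise disjoint sets with $V=A\cup B\cup C$, such that $C$ separates $A$ from $B$ in $G$ and $C$ is complete in $G$. Let $N$ be a symmetric positive definite $n\times n$ real matrix and $M=N_G$. Then $M$ is positive definite if and only if all of the following hold: (1) $M_{A\cup C}=\begin{pmatrix} M_{AA} & M_{AC}\\ M_{CA} & M_{CC}\end{pmatrix}$ is positive definite; (2) $M_{B\cup C}=\begin{pmatrix} M_{CC} & M_{CB}\\ M_{BC} & M_{BB}\end{pmatrix}$ is positive definite; (3) $S_1+S_2-M_{CC}$ is positive definite, where $S_1=M_{CC}-M_{CA}M_{AA}^{-1}M_{AC}$ and $S_2=M_{CC}-M_{CB}M_{BB}^{-1}M_{BC}$. Moreover, the same equivalence holds when conditions (1) and (2) are replaced by (1') $M_{AA}$ is positive definite and (2') $M_{BB}$ is positive definite.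
   Context: For a symmetric $n\times n$ real matrix $N=(n_{ij})$, $N_G$ is defined by $(N_G)_{ij}=n_{ij}$ if $i=j$ or $(i,j)\in E$, and $0$ otherwise. For index sets $X,Y\subseteq V$, $M_{XY}$ denotes the submatrix of $M$ with rows indexed by $X$ and columns indexed by $Y$. $C$ separates $A$ from $B$ means every path in $G$ from a vertex of $A$ to a vertex of $B$ contains a vertex of $C$; $C$ complete means every two distinct vertices of $C$ are adjacent. *)

theory Defs
  imports "Jordan_Normal_Form.Gauss_Jordan_Elimination" "Jordan_Normal_Form.DL_Submatrix"
begin

text \<open>Graph on vertex set V = {0..<n} given by an edge relation E (pairs of vertices).\<close>

definition graph_walk :: "(nat \<times> nat) set \<Rightarrow> nat list \<Rightarrow> bool" where
  "graph_walk E xs \<longleftrightarrow> xs \<noteq> [] \<and> (\<forall>i. Suc i < length xs \<longrightarrow> (xs ! i, xs ! Suc i) \<in> E)"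

definition separates :: "(nat \<times> nat) set \<Rightarrow> nat set \<Rightarrow> nat set \<Rightarrow> nat set \<Rightarrow> bool" where
  "separates E C A B \<longleftrightarrow>
     (\<forall>xs. graph_walk E xs \<and> distinct xs \<and> hd xs \<in> A \<and> last xs \<in> B \<longrightarrow> set xs \<inter> C \<noteq> {})"

definition complete_in :: "(nat \<times> nat) set \<Rightarrow> nat set \<Rightarrow> bool" where
  "complete_in E C \<longleftrightarrow> (\<forall>i\<in>C. \<forall>j\<in>C. i \<noteq> j \<longrightarrow> (i, j) \<in> E)"

definition restrict_graph :: "(nat \<times> nat) set \<Rightarrow> real mat \<Rightarrow> real mat" where
  "restrict_graph E N = mat (dim_row N) (dim_col N)
     (\<lambda>(i,j). if i = j \<or> (i, j) \<in> E then N $$ (i,j) else 0)"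

definition pos_def :: "real mat \<Rightarrow> bool" where
  "pos_def A \<longleftrightarrow> A \<in> carrier_mat (dim_row A) (dim_row A) \<and> transpose_mat A = A \<and>
     (\<forall>v \<in> carrier_vec (dim_row A). v \<noteq> 0\<^sub>v (dim_row A) \<longrightarrow> v \<bullet> (A *\<^sub>v v) > 0)"

text \<open>Matrix inverse (meaningful when the matrix is invertible).\<close>
definition mat_inv :: "real mat \<Rightarrow> real mat" where
  "mat_inv A = the (mat_inverse A)"

text \<open>Submatrix M_{XY}: rows indexed by X, columns by Y (in increasing order).\<close>
abbreviation sub :: "real mat \<Rightarrow> nat set \<Rightarrow> nat set \<Rightarrow> real mat" where
  "sub M X Y \<equiv> submatrix M X Y"

end

theory Submission imports Defs "Jordan_Normal_Form.Determinant" begin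

lemma pick_facts:
  assumes "X \<subseteq> {0..<n}" "k < card X"
  shows "pick X k \<in> X" "pick X k < n"
proof -
  show "pick X k \<in> X" using pick_in_set[of k X] assms(2) by blast
  thus "pick X k < n" using assms(1) by auto
qed

lemma pick_inj:
  assumes "k < card X" "l < card X" "pick X k = pick X l"
  shows "k = l"
proof (rule ccontr)
  assume "k \<noteq> l"
  hence "k < l \<or> l < k" by arith
  thus False
  proof
    assume "k < l" thus False using pick_mono[of l X k] assms by simp
  next
    assume "l < k" thus False using pick_mono[of k X l] assms by simp
  qed
qed

lemma pick_bij:
  assumes "finite X"
  shows "bij_betw (pick X) {..<card X} X"
proof (rule bij_betw_imageI)
  show "inj_on (pick X) {..<card X}"
  proof (rule inj_onI)
    fix x y assume "x \<in> {..<card X}" "y \<in> {..<card X}" "pick X x = pick X y"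
    thus "x = y" using pick_inj[of x X y] by simp
  qed
  show "pick X ` {..<card X} = X"
  proof
    show "pick X ` {..<card X} \<subseteq> X"
    proof
      fix i assume "i \<in> pick X ` {..<card X}"
      then obtain k where "k < card X" "i = pick X k" by auto
      thus "i \<in> X" using pick_in_set[of k X] by simp
    qed
    show "X \<subseteq> pick X ` {..<card X}"
    proof
      fix i assume i: "i \<in> X"
      have "{a\<in>X. a < i} \<subset> X" using i by auto
      hence "card {a\<in>X. a < i} < card X" using assms by (simp add: psubset_card_mono)
      hence "pick X (card {a\<in>X. a < i}) \<in> pick X ` {..<card X}" by simp
      thus "i \<in> pick X ` {..<card X}" using pick_card_in_set[OF i] by simp
    qed
  qed
qed

lemma card_sub_eq: "X \<subseteq> {0..<n} \<Longrightarrow> card {i. i < n \<and> i \<in> X} = card X"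
proof -
  assume "X \<subseteq> {0..<n}"
  hence "{i. i < n \<and> i \<in> X} = X" by auto
  thus ?thesis by simp
qed

definition selm :: "nat \<Rightarrow> nat set \<Rightarrow> real mat" where
  "selm n X = mat n (card X) (\<lambda>(i,k). if i = pick X k then 1 else 0)"

lemma selm_carrier[simp]: "selm n X \<in> carrier_mat n (card X)"
  unfolding selm_def by simp

lemma selm_dim[simp]: "dim_row (selm n X) = n" "dim_col (selm n X) = card X"
  unfolding selm_def by simp_all

lemma selm_mv_carrier[simp]: "selm n X *\<^sub>v y \<in> carrier_vec n"
  by (rule carrier_vecI) simp

lemma sum_delta_lt: "j < (n::nat) \<Longrightarrow> (\<Sum>i = 0..<n. if i = j then f i else (0::real)) = f j"
  by (subst sum.delta) auto

lemma sum_delta_r: "p < (n::nat) \<Longrightarrow> (\<Sum>j = 0..<n. g j * (if j = p then 1 else (0::real))) = g p"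
proof -
  assume p: "p < n"
  have "(\<Sum>j = 0..<n. g j * (if j = p then 1 else (0::real))) = (\<Sum>j = 0..<n. if j = p then g j else 0)"
    by (rule sum.cong) auto
  thus ?thesis using p by (simp add: sum_delta_lt)
qed

lemma sum_delta_l: "p < (n::nat) \<Longrightarrow> (\<Sum>j = 0..<n. (if j = p then 1 else (0::real)) * g j) = g p"
  using sum_delta_r[of p n g] by (simp add: mult.commute)

lemma selm_TT:
  assumes "X \<subseteq> {0..<n}"
  shows "transpose_mat (selm n X) * selm n X = 1\<^sub>m (card X)"
proof (rule eq_matI)
  fix k l assume "k < dim_row (1\<^sub>m (card X))" "l < dim_col (1\<^sub>m (card X))"
  hence kl: "k < card X" "l < card X" by auto
  have "(transpose_mat (selm n X) * selm n X) $$ (k,l)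
     = (\<Sum>i = 0..<n. (if i = pick X k then 1 else 0) * (if i = pick X l then 1 else 0))"
    using kl unfolding selm_def by (simp add: scalar_prod_def)
  also have "\<dots> = (\<Sum>i = 0..<n. if i = pick X k then (if i = pick X l then 1 else 0) else 0)"
    by (rule sum.cong) auto
  also have "\<dots> = (if pick X k = pick X l then 1 else 0)"
    using pick_facts[OF assms kl(1)] by (subst sum_delta_lt) auto
  also have "\<dots> = 1\<^sub>m (card X) $$ (k,l)" using kl pick_inj[OF kl] by auto
  finally show "(transpose_mat (selm n X) * selm n X) $$ (k,l) = 1\<^sub>m (card X) $$ (k,l)" .
qed auto

lemma selm_TT0:
  assumes "X \<subseteq> {0..<n}" "Y \<subseteq> {0..<n}" "X \<inter> Y = {}"
  shows "transpose_mat (selm n X) * selm n Y = 0\<^sub>m (card X) (card Y)"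
proof (rule eq_matI)
  fix k l assume "k < dim_row (0\<^sub>m (card X) (card Y))" "l < dim_col (0\<^sub>m (card X) (card Y))"
  hence kl: "k < card X" "l < card Y" by auto
  have "(transpose_mat (selm n X) * selm n Y) $$ (k,l)
     = (\<Sum>i = 0..<n. (if i = pick X k then 1 else 0) * (if i = pick Y l then 1 else 0))"
    using kl unfolding selm_def by (simp add: scalar_prod_def)
  also have "\<dots> = (\<Sum>i = 0..<n. if i = pick X k then (if i = pick Y l then 1 else 0) else 0)"
    by (rule sum.cong) auto
  also have "\<dots> = (if pick X k = pick Y l then 1 else 0)"
    using pick_facts[OF assms(1) kl(1)] by (subst sum_delta_lt) auto
  also have "\<dots> = 0" using pick_facts[OF assms(1) kl(1)] pick_facts[OF assms(2) kl(2)] assms(3) by auto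
  finally show "(transpose_mat (selm n X) * selm n Y) $$ (k,l) = 0\<^sub>m (card X) (card Y) $$ (k,l)" 
    using kl by simp
qed auto

lemma selm_sub:
  assumes "X \<subseteq> {0..<n}" "Y \<subseteq> {0..<n}" "M \<in> carrier_mat n n"
  shows "sub M X Y = transpose_mat (selm n X) * M * selm n Y"
proof (rule eq_matI)
  show "dim_row (sub M X Y) = dim_row (transpose_mat (selm n X) * M * selm n Y)"
    using assms by (simp add: dim_submatrix card_sub_eq)
  show "dim_col (sub M X Y) = dim_col (transpose_mat (selm n X) * M * selm n Y)"
    using assms by (simp add: dim_submatrix card_sub_eq)
  fix k l assume "k < dim_row (transpose_mat (selm n X) * M * selm n Y)" 
    "l < dim_col (transpose_mat (selm n X) * M * selm n Y)"
  hence kl: "k < card X" "l < card Y" by auto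
  have "(transpose_mat (selm n X) * M * selm n Y) $$ (k,l) = 
     (transpose_mat (selm n X) * (M * selm n Y)) $$ (k,l)"
    using assms by (subst assoc_mult_mat[of _ _ n _ n _ "card Y"]) auto
  also have "\<dots> = (\<Sum>i = 0..<n. (if i = pick X k then 1 else 0) *
       (\<Sum>j = 0..<n. M $$ (i,j) * (if j = pick Y l then 1 else 0)))"
    using kl assms unfolding selm_def by (simp add: scalar_prod_def)
  also have "\<dots> = (\<Sum>j = 0..<n. M $$ (pick X k, j) * (if j = pick Y l then 1 else 0))"
    by (rule sum_delta_l[OF pick_facts(2)[OF assms(1) kl(1)]])
  also have "\<dots> = M $$ (pick X k, pick Y l)"
    by (rule sum_delta_r[OF pick_facts(2)[OF assms(2) kl(2)]])
  also have "\<dots> = sub M X Y $$ (k,l)"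
    using kl assms by (simp add: submatrix_index card_sub_eq)
  finally show "sub M X Y $$ (k,l) = (transpose_mat (selm n X) * M * selm n Y) $$ (k,l)" by (rule sym)
qed

lemma flip_sp:
  fixes K :: "real mat"
  assumes "K \<in> carrier_mat r s" "x \<in> carrier_vec r" "y \<in> carrier_vec s"
  shows "x \<bullet> (K *\<^sub>v y) = y \<bullet> (transpose_mat K *\<^sub>v x)"
proof -
  have "(transpose_mat K *\<^sub>v x) \<bullet> y = x \<bullet> (K *\<^sub>v y)"
    by (rule transpose_vec_mult_scalar[OF assms(1) assms(3) assms(2)])
  moreover have "(transpose_mat K *\<^sub>v x) \<bullet> y = y \<bullet> (transpose_mat K *\<^sub>v x)"
    by (rule comm_scalar_prod[of _ s]) (use assms in auto)
  ultimately show ?thesis by simp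
qed

lemma flip_sym:
  fixes M :: "real mat"
  assumes "M \<in> carrier_mat n n" "transpose_mat M = M" "x \<in> carrier_vec n" "y \<in> carrier_vec n"
  shows "x \<bullet> (M *\<^sub>v y) = y \<bullet> (M *\<^sub>v x)"
  using flip_sp[OF assms(1,3,4)] assms(2) by simp

lemma zero_mat_mult_vec': "y \<in> carrier_vec s \<Longrightarrow> 0\<^sub>m r s *\<^sub>v y = (0\<^sub>v r :: real vec)"
  by (intro eq_vecI) (auto simp: scalar_prod_def)

lemma selm_vec:
  assumes "X \<subseteq> {0..<n}" "Y \<subseteq> {0..<n}" "M \<in> carrier_mat n n"
    "x \<in> carrier_vec (card X)" "y \<in> carrier_vec (card Y)"
  shows "x \<bullet> (sub M X Y *\<^sub>v y) = (selm n X *\<^sub>v x) \<bullet> (M *\<^sub>v (selm n Y *\<^sub>v y))"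
proof -
  have "sub M X Y *\<^sub>v y = transpose_mat (selm n X) *\<^sub>v (M *\<^sub>v (selm n Y *\<^sub>v y))"
  proof -
    have "(transpose_mat (selm n X) * M * selm n Y) *\<^sub>v y = (transpose_mat (selm n X) * M) *\<^sub>v (selm n Y *\<^sub>v y)"
      by (rule assoc_mult_mat_vec[of "transpose_mat (selm n X) * M" "card X" n "selm n Y" "card Y" y])
         (use assms in auto)
    also have "\<dots> = transpose_mat (selm n X) *\<^sub>v (M *\<^sub>v (selm n Y *\<^sub>v y))"
      by (rule assoc_mult_mat_vec[of "transpose_mat (selm n X)" "card X" n M n "selm n Y *\<^sub>v y"])
         (use assms in auto)
    finally show ?thesis unfolding selm_sub[OF assms(1-3)] .
  qed
  hence "x \<bullet> (sub M X Y *\<^sub>v y) = x \<bullet> (transpose_mat (selm n X) *\<^sub>v (M *\<^sub>v (selm n Y *\<^sub>v y)))"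
    by simp
  also have "\<dots> = (M *\<^sub>v (selm n Y *\<^sub>v y)) \<bullet> (transpose_mat (transpose_mat (selm n X)) *\<^sub>v x)"
    by (rule flip_sp[of _ "card X" n]) (use assms in auto)
  also have "\<dots> = (selm n X *\<^sub>v x) \<bullet> (M *\<^sub>v (selm n Y *\<^sub>v y))"
    by (simp, rule comm_scalar_prod[of _ n]) (use assms in auto)
  finally show ?thesis .
qed

lemma selm_coord_same:
  assumes "X \<subseteq> {0..<n}" "y \<in> carrier_vec (card X)"
  shows "transpose_mat (selm n X) *\<^sub>v (selm n X *\<^sub>v y) = y"
proof -
  have "transpose_mat (selm n X) *\<^sub>v (selm n X *\<^sub>v y) = (transpose_mat (selm n X) * selm n X) *\<^sub>v y"
    by (rule assoc_mult_mat_vec[of "transpose_mat (selm n X)" "card X" n "selm n X" "card X" y, symmetric])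
       (use assms in auto)
  also have "\<dots> = y" using selm_TT[OF assms(1)] assms by simp
  finally show ?thesis .
qed

lemma selm_coord_dis:
  assumes "X \<subseteq> {0..<n}" "Y \<subseteq> {0..<n}" "X \<inter> Y = {}" "y \<in> carrier_vec (card Y)"
  shows "transpose_mat (selm n X) *\<^sub>v (selm n Y *\<^sub>v y) = 0\<^sub>v (card X)"
proof -
  have "transpose_mat (selm n X) *\<^sub>v (selm n Y *\<^sub>v y) = (transpose_mat (selm n X) * selm n Y) *\<^sub>v y"
    by (rule assoc_mult_mat_vec[of "transpose_mat (selm n X)" "card X" n "selm n Y" "card Y" y, symmetric])
       (use assms in auto)
  also have "\<dots> = 0\<^sub>v (card X)" using selm_TT0[OF assms(1-3)] assms by (simp add: zero_mat_mult_vec')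
  finally show ?thesis .
qed

lemma mv_index:
  fixes A :: "real mat"
  assumes "A \<in> carrier_mat r c" "w \<in> carrier_vec c" "i < r"
  shows "(A *\<^sub>v w) $ i = (\<Sum>k = 0..<c. A $$ (i,k) * w $ k)"
  using assms by (auto simp: scalar_prod_def)

lemma selm_proj:
  assumes "X \<subseteq> {0..<n}" "v \<in> carrier_vec n" "i < n"
  shows "(selm n X *\<^sub>v (transpose_mat (selm n X) *\<^sub>v v)) $ i = (if i \<in> X then v $ i else 0)"
proof -
  have fin: "finite X" using assms(1) finite_subset by blast
  have "(selm n X *\<^sub>v (transpose_mat (selm n X) *\<^sub>v v)) $ i =
     (\<Sum>k = 0..<card X. (if i = pick X k then 1 else 0) * (\<Sum>j = 0..<n. (if j = pick X k then 1 else 0) * v $ j))"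
  proof -
    have "(selm n X *\<^sub>v (transpose_mat (selm n X) *\<^sub>v v)) $ i
      = (\<Sum>k = 0..<card X. selm n X $$ (i,k) * (transpose_mat (selm n X) *\<^sub>v v) $ k)"
      by (rule mv_index[of _ n "card X"]) (use assms in \<open>auto intro!: carrier_vecI\<close>)
    also have "\<dots> = (\<Sum>k = 0..<card X. (if i = pick X k then 1 else 0) * (\<Sum>j = 0..<n. (if j = pick X k then 1 else 0) * v $ j))"
    proof (rule sum.cong[OF refl])
      fix k assume k: "k \<in> {0..<card X}"
      have "(transpose_mat (selm n X) *\<^sub>v v) $ k = (\<Sum>j = 0..<n. transpose_mat (selm n X) $$ (k,j) * v $ j)"
        by (rule mv_index[of _ "card X" n]) (use assms k in auto)
      also have "\<dots> = (\<Sum>j = 0..<n. (if j = pick X k then 1 else 0) * v $ j)"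
        by (rule sum.cong[OF refl]) (use k assms in \<open>auto simp: selm_def\<close>)
      finally show "selm n X $$ (i,k) * (transpose_mat (selm n X) *\<^sub>v v) $ k = 
        (if i = pick X k then 1 else 0) * (\<Sum>j = 0..<n. (if j = pick X k then 1 else 0) * v $ j)"
        using k assms by (simp add: selm_def)
    qed
    finally show ?thesis .
  qed
  also have "\<dots> = (\<Sum>k = 0..<card X. (if i = pick X k then 1 else 0) * v $ pick X k)"
    by (rule sum.cong[OF refl], subst sum_delta_l) (use pick_facts[OF assms(1)] in auto)
  also have "\<dots> = (\<Sum>k \<in> {..<card X}. (\<lambda>j. (if i = j then 1 else 0) * v $ j) (pick X k))"
    by (simp only: atLeast0LessThan)
  also have "\<dots> = (\<Sum>j \<in> X. (if i = j then 1 else 0) * v $ j)"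
    by (rule sum.reindex_bij_betw[OF pick_bij[OF fin]])
  also have "\<dots> = (\<Sum>j \<in> X. if i = j then v $ j else 0)"
    by (rule sum.cong) auto
  also have "\<dots> = (if i \<in> X then v $ i else 0)"
    using fin by (simp add: sum.delta)
  finally show ?thesis .
qed


lemma pd_nonneg:
  assumes "pos_def P" "x \<in> carrier_vec (dim_row P)"
  shows "x \<bullet> (P *\<^sub>v x) \<ge> 0"
proof (cases "x = 0\<^sub>v (dim_row P)")
  case True
  have c: "P *\<^sub>v x \<in> carrier_vec (dim_row P)" by (rule carrier_vecI) simp
  have "x \<bullet> (P *\<^sub>v x) = 0" unfolding True by (rule scalar_prod_left_zero) (use c True in simp)
  thus ?thesis by simp
next
  case False
  have "\<forall>v \<in> carrier_vec (dim_row P). v \<noteq> 0\<^sub>v (dim_row P) \<longrightarrow> v \<bullet> (P *\<^sub>v v) > 0"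
    using assms(1) unfolding pos_def_def by blast
  hence "x \<bullet> (P *\<^sub>v x) > 0" using False assms(2) by blast
  thus ?thesis by simp
qed

lemma pd_inv:
  assumes pd: "pos_def P" and Pc: "P \<in> carrier_mat m m"
  shows "mat_inv P \<in> carrier_mat m m \<and> P * mat_inv P = 1\<^sub>m m \<and> mat_inv P * P = 1\<^sub>m m
         \<and> transpose_mat (mat_inv P) = mat_inv P"
proof -
  have dr: "dim_row P = m" using Pc by auto
  have PT: "transpose_mat P = P" using pd unfolding pos_def_def by blast
  have pos: "\<forall>v \<in> carrier_vec m. v \<noteq> 0\<^sub>v m \<longrightarrow> v \<bullet> (P *\<^sub>v v) > 0"
    using pd unfolding pos_def_def dr by blast
  have "det P \<noteq> 0"
  proof
    assume "det P = 0"
    hence "\<exists>v. v \<in> carrier_vec m \<and> v \<noteq> 0\<^sub>v m \<and> P *\<^sub>v v = 0\<^sub>v m"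
      using det_0_iff_vec_prod_zero[OF Pc] by blast
    then obtain v where v: "v \<in> carrier_vec m" "v \<noteq> 0\<^sub>v m" "P *\<^sub>v v = 0\<^sub>v m" by blast
    have "v \<bullet> (P *\<^sub>v v) > 0" using pos v(1,2) by blast
    moreover have "v \<bullet> (P *\<^sub>v v) = 0" unfolding v(3) by (rule scalar_prod_right_zero[OF v(1)])
    ultimately show False by simp
  qed
  hence U: "P \<in> Units (ring_mat TYPE(real) m undefined)" by (rule det_non_zero_imp_unit[OF Pc])
  have "mat_inverse P \<noteq> None"
  proof
    assume "mat_inverse P = None"
    hence "P \<notin> Units (ring_mat TYPE(real) m undefined)" by (rule mat_inverse(1)[OF Pc])
    thus False using U by contradiction
  qed
  then obtain B where B: "mat_inverse P = Some B" by blast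
  have BB0: "P * B = 1\<^sub>m m \<and> B * P = 1\<^sub>m m \<and> B \<in> carrier_mat m m"
    by (rule mat_inverse(2)[OF Pc B])
  have BB: "P * B = 1\<^sub>m m" "B * P = 1\<^sub>m m" "B \<in> carrier_mat m m" using BB0 by blast+
  have inv: "mat_inv P = B" unfolding mat_inv_def B by simp
  have TBc: "transpose_mat B \<in> carrier_mat m m" using BB(3) by simp
  have h: "transpose_mat B * P = 1\<^sub>m m"
  proof -
    have "transpose_mat (P * B) = transpose_mat B * transpose_mat P"
      by (rule transpose_mult[OF Pc BB(3)])
    hence "transpose_mat (1\<^sub>m m) = transpose_mat B * P" unfolding BB(1) PT .
    thus ?thesis by simp
  qed
  have "transpose_mat B = transpose_mat B * 1\<^sub>m m" by (rule right_mult_one_mat[OF TBc, symmetric])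
  also have "\<dots> = transpose_mat B * (P * B)" unfolding BB(1) ..
  also have "\<dots> = (transpose_mat B * P) * B"
    by (rule assoc_mult_mat[OF TBc Pc BB(3), symmetric])
  also have "\<dots> = B" unfolding h by (rule left_mult_one_mat[OF BB(3)])
  finally have "transpose_mat B = B" .
  thus ?thesis using BB inv by simp
qed

lemma exp3:
  fixes M :: "real mat"
  assumes Mc: "M \<in> carrier_mat n n" and u: "u1 \<in> carrier_vec n" "u2 \<in> carrier_vec n" "u3 \<in> carrier_vec n"
  shows "(u1 + u2 + u3) \<bullet> (M *\<^sub>v (u1 + u2 + u3)) =
    u1 \<bullet> (M *\<^sub>v u1) + u1 \<bullet> (M *\<^sub>v u2) + u1 \<bullet> (M *\<^sub>v u3) +
    (u2 \<bullet> (M *\<^sub>v u1) + u2 \<bullet> (M *\<^sub>v u2) + u2 \<bullet> (M *\<^sub>v u3)) +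
    (u3 \<bullet> (M *\<^sub>v u1) + u3 \<bullet> (M *\<^sub>v u2) + u3 \<bullet> (M *\<^sub>v u3))"
proof -
  have c: "M *\<^sub>v u1 \<in> carrier_vec n" "M *\<^sub>v u2 \<in> carrier_vec n" "M *\<^sub>v u3 \<in> carrier_vec n"
    using Mc u by auto
  have m: "M *\<^sub>v (u1 + u2 + u3) = M *\<^sub>v u1 + M *\<^sub>v u2 + M *\<^sub>v u3"
  proof -
    have "M *\<^sub>v (u1 + u2 + u3) = M *\<^sub>v (u1 + u2) + M *\<^sub>v u3"
      by (rule mult_add_distrib_mat_vec[OF Mc]) (use u in auto)
    also have "M *\<^sub>v (u1 + u2) = M *\<^sub>v u1 + M *\<^sub>v u2"
      by (rule mult_add_distrib_mat_vec[OF Mc u(1,2)])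
    finally show ?thesis .
  qed
  have l: "\<And>w. w \<in> carrier_vec n \<Longrightarrow> (u1 + u2 + u3) \<bullet> w = u1 \<bullet> w + u2 \<bullet> w + u3 \<bullet> w"
  proof -
    fix w :: "real vec" assume w: "w \<in> carrier_vec n"
    have "(u1 + u2 + u3) \<bullet> w = (u1 + u2) \<bullet> w + u3 \<bullet> w"
      by (rule add_scalar_prod_distrib[of _ n]) (use u w in auto)
    also have "(u1 + u2) \<bullet> w = u1 \<bullet> w + u2 \<bullet> w"
      by (rule add_scalar_prod_distrib[OF u(1,2) w])
    finally show "(u1 + u2 + u3) \<bullet> w = u1 \<bullet> w + u2 \<bullet> w + u3 \<bullet> w" .
  qed
  have r: "\<And>w. w \<in> carrier_vec n \<Longrightarrow> w \<bullet> (M *\<^sub>v u1 + M *\<^sub>v u2 + M *\<^sub>v u3) =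
       w \<bullet> (M *\<^sub>v u1) + w \<bullet> (M *\<^sub>v u2) + w \<bullet> (M *\<^sub>v u3)"
  proof -
    fix w :: "real vec" assume w: "w \<in> carrier_vec n"
    have "w \<bullet> (M *\<^sub>v u1 + M *\<^sub>v u2 + M *\<^sub>v u3) = w \<bullet> (M *\<^sub>v u1 + M *\<^sub>v u2) + w \<bullet> (M *\<^sub>v u3)"
      by (rule scalar_prod_add_distrib[of _ n]) (use c w in auto)
    also have "w \<bullet> (M *\<^sub>v u1 + M *\<^sub>v u2) = w \<bullet> (M *\<^sub>v u1) + w \<bullet> (M *\<^sub>v u2)"
      by (rule scalar_prod_add_distrib[OF w c(1,2)])
    finally show "w \<bullet> (M *\<^sub>v u1 + M *\<^sub>v u2 + M *\<^sub>v u3) =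
       w \<bullet> (M *\<^sub>v u1) + w \<bullet> (M *\<^sub>v u2) + w \<bullet> (M *\<^sub>v u3)" .
  qed
  have cs: "M *\<^sub>v u1 + M *\<^sub>v u2 + M *\<^sub>v u3 \<in> carrier_vec n" using c by auto
  show ?thesis unfolding m l[OF cs] r[OF u(1)] r[OF u(2)] r[OF u(3)] by simp
qed

lemma coord3:
  assumes X: "A \<subseteq> {0..<n}" "B \<subseteq> {0..<n}" "C \<subseteq> {0..<n}"
    and D: "A \<inter> B = {}" "A \<inter> C = {}" "B \<inter> C = {}"
    and x: "xa \<in> carrier_vec (card A)" "xb \<in> carrier_vec (card B)" "xc \<in> carrier_vec (card C)"
  shows "transpose_mat (selm n A) *\<^sub>v (selm n A *\<^sub>v xa + selm n B *\<^sub>v xb + selm n C *\<^sub>v xc) = xa"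
    "transpose_mat (selm n B) *\<^sub>v (selm n A *\<^sub>v xa + selm n B *\<^sub>v xb + selm n C *\<^sub>v xc) = xb"
    "transpose_mat (selm n C) *\<^sub>v (selm n A *\<^sub>v xa + selm n B *\<^sub>v xb + selm n C *\<^sub>v xc) = xc"
proof -
  have D': "B \<inter> A = {}" "C \<inter> A = {}" "C \<inter> B = {}" using D by auto
  have gen: "\<And>X. X \<subseteq> {0..<n} \<Longrightarrow> transpose_mat (selm n X) *\<^sub>v (selm n A *\<^sub>v xa + selm n B *\<^sub>v xb + selm n C *\<^sub>v xc)
     = transpose_mat (selm n X) *\<^sub>v (selm n A *\<^sub>v xa) + transpose_mat (selm n X) *\<^sub>v (selm n B *\<^sub>v xb)
       + transpose_mat (selm n X) *\<^sub>v (selm n C *\<^sub>v xc)"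
  proof -
    fix X assume "X \<subseteq> {0..<n}"
    have tc: "transpose_mat (selm n X) \<in> carrier_mat (card X) n" by simp
    have "transpose_mat (selm n X) *\<^sub>v (selm n A *\<^sub>v xa + selm n B *\<^sub>v xb + selm n C *\<^sub>v xc)
      = transpose_mat (selm n X) *\<^sub>v (selm n A *\<^sub>v xa + selm n B *\<^sub>v xb) + transpose_mat (selm n X) *\<^sub>v (selm n C *\<^sub>v xc)"
      by (rule mult_add_distrib_mat_vec[OF tc]) auto
    also have "transpose_mat (selm n X) *\<^sub>v (selm n A *\<^sub>v xa + selm n B *\<^sub>v xb) = 
       transpose_mat (selm n X) *\<^sub>v (selm n A *\<^sub>v xa) + transpose_mat (selm n X) *\<^sub>v (selm n B *\<^sub>v xb)"
      by (rule mult_add_distrib_mat_vec[OF tc]) auto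
    finally show "transpose_mat (selm n X) *\<^sub>v (selm n A *\<^sub>v xa + selm n B *\<^sub>v xb + selm n C *\<^sub>v xc)
     = transpose_mat (selm n X) *\<^sub>v (selm n A *\<^sub>v xa) + transpose_mat (selm n X) *\<^sub>v (selm n B *\<^sub>v xb)
       + transpose_mat (selm n X) *\<^sub>v (selm n C *\<^sub>v xc)" .
  qed
  show "transpose_mat (selm n A) *\<^sub>v (selm n A *\<^sub>v xa + selm n B *\<^sub>v xb + selm n C *\<^sub>v xc) = xa"
    unfolding gen[OF X(1)] selm_coord_same[OF X(1) x(1)] selm_coord_dis[OF X(1) X(2) D(1) x(2)]
      selm_coord_dis[OF X(1) X(3) D(2) x(3)] using x by simp
  show "transpose_mat (selm n B) *\<^sub>v (selm n A *\<^sub>v xa + selm n B *\<^sub>v xb + selm n C *\<^sub>v xc) = xb"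
    unfolding gen[OF X(2)] selm_coord_same[OF X(2) x(2)] selm_coord_dis[OF X(2) X(1) D'(1) x(1)]
      selm_coord_dis[OF X(2) X(3) D(3) x(3)] using x by simp
  show "transpose_mat (selm n C) *\<^sub>v (selm n A *\<^sub>v xa + selm n B *\<^sub>v xb + selm n C *\<^sub>v xc) = xc"
    unfolding gen[OF X(3)] selm_coord_same[OF X(3) x(3)] selm_coord_dis[OF X(3) X(1) D'(2) x(1)]
      selm_coord_dis[OF X(3) X(2) D'(3) x(2)] using x by simp
qed

lemma decomp3:
  assumes X: "A \<subseteq> {0..<n}" "B \<subseteq> {0..<n}" "C \<subseteq> {0..<n}"
    and D: "A \<inter> B = {}" "A \<inter> C = {}" "B \<inter> C = {}"
    and cov: "A \<union> B \<union> C = {0..<n}"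
    and v: "v \<in> carrier_vec n"
  shows "v = selm n A *\<^sub>v (transpose_mat (selm n A) *\<^sub>v v) + selm n B *\<^sub>v (transpose_mat (selm n B) *\<^sub>v v)
            + selm n C *\<^sub>v (transpose_mat (selm n C) *\<^sub>v v)" (is "v = ?a + ?b + ?c")
proof (rule eq_vecI)
  show "dim_vec v = dim_vec (?a + ?b + ?c)" using v by simp
  fix i assume "i < dim_vec (?a + ?b + ?c)"
  hence i: "i < n" by simp
  have "(?a + ?b + ?c) $ i = ?a $ i + ?b $ i + ?c $ i" using i by simp
  also have "\<dots> = (if i \<in> A then v $ i else 0) + (if i \<in> B then v $ i else 0) + (if i \<in> C then v $ i else 0)"
    unfolding selm_proj[OF X(1) v i] selm_proj[OF X(2) v i] selm_proj[OF X(3) v i] ..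
  also have "\<dots> = v $ i" using i cov D by auto
  finally show "v $ i = (?a + ?b + ?c) $ i" by simp
qed

lemma fb_quad:
  fixes P :: "real mat"
  assumes c: "P \<in> carrier_mat a a" "K \<in> carrier_mat a c" "L \<in> carrier_mat c a" "R \<in> carrier_mat c c"
    and x: "xa \<in> carrier_vec a" "xc \<in> carrier_vec c"
  shows "(xa @\<^sub>v xc) \<bullet> (four_block_mat P K L R *\<^sub>v (xa @\<^sub>v xc)) =
     xa \<bullet> (P *\<^sub>v xa) + xa \<bullet> (K *\<^sub>v xc) + (xc \<bullet> (L *\<^sub>v xa) + xc \<bullet> (R *\<^sub>v xc))"
proof -
  have "four_block_mat P K L R *\<^sub>v (xa @\<^sub>v xc) = (P *\<^sub>v xa + K *\<^sub>v xc) @\<^sub>v (L *\<^sub>v xa + R *\<^sub>v xc)"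
    by (rule four_block_mat_mult_vec[OF c x])
  hence "(xa @\<^sub>v xc) \<bullet> (four_block_mat P K L R *\<^sub>v (xa @\<^sub>v xc)) = 
      xa \<bullet> (P *\<^sub>v xa + K *\<^sub>v xc) + xc \<bullet> (L *\<^sub>v xa + R *\<^sub>v xc)"
    using scalar_prod_append[of xa a xc c "P *\<^sub>v xa + K *\<^sub>v xc" "L *\<^sub>v xa + R *\<^sub>v xc"] c x by simp
  also have "xa \<bullet> (P *\<^sub>v xa + K *\<^sub>v xc) = xa \<bullet> (P *\<^sub>v xa) + xa \<bullet> (K *\<^sub>v xc)"
    by (rule scalar_prod_add_distrib[of _ a]) (use c x in auto)
  also have "xc \<bullet> (L *\<^sub>v xa + R *\<^sub>v xc) = xc \<bullet> (L *\<^sub>v xa) + xc \<bullet> (R *\<^sub>v xc)"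
    by (rule scalar_prod_add_distrib[of _ c]) (use c x in auto)
  finally show ?thesis .
qed

lemma append_zero_iff:
  assumes "xa \<in> carrier_vec a" "xc \<in> carrier_vec c"
  shows "(xa @\<^sub>v xc = 0\<^sub>v (a + c)) \<longleftrightarrow> (xa = 0\<^sub>v a \<and> xc = (0\<^sub>v c :: real vec))"
proof -
  have "0\<^sub>v (a + c) = 0\<^sub>v a @\<^sub>v (0\<^sub>v c :: real vec)" by (rule eq_vecI) auto
  thus ?thesis using append_vec_eq[of xa a "0\<^sub>v a" xc "0\<^sub>v c"] assms by simp
qed

lemma schur:
  fixes P :: "real mat"
  assumes P: "P \<in> carrier_mat a a" "transpose_mat P = P"
    and Q: "Q \<in> carrier_mat a a" "P * Q = 1\<^sub>m a" "transpose_mat Q = Q"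
    and K: "K \<in> carrier_mat a c"
    and x: "xa \<in> carrier_vec a" "xc \<in> carrier_vec c"
  shows "(xa + Q *\<^sub>v (K *\<^sub>v xc)) \<bullet> (P *\<^sub>v (xa + Q *\<^sub>v (K *\<^sub>v xc))) =
     xa \<bullet> (P *\<^sub>v xa) + 2 * (xa \<bullet> (K *\<^sub>v xc)) + xc \<bullet> ((transpose_mat K * Q * K) *\<^sub>v xc)"
proof -
  define w where "w = K *\<^sub>v xc"
  define z where "z = Q *\<^sub>v w"
  have w: "w \<in> carrier_vec a" unfolding w_def using K x by simp
  have z: "z \<in> carrier_vec a" unfolding z_def using Q w by simp
  have Pz: "P *\<^sub>v z = w"
  proof -
    have "P *\<^sub>v z = (P * Q) *\<^sub>v w" unfolding z_def
      by (rule assoc_mult_mat_vec[OF P(1) Q(1) w, symmetric])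
    thus ?thesis using Q(2) w by simp
  qed
  have Px: "P *\<^sub>v xa \<in> carrier_vec a" using P x by simp
  have "(xa + z) \<bullet> (P *\<^sub>v (xa + z)) = (xa + z) \<bullet> (P *\<^sub>v xa + w)"
    using mult_add_distrib_mat_vec[OF P(1) x(1) z] Pz by simp
  also have "\<dots> = xa \<bullet> (P *\<^sub>v xa + w) + z \<bullet> (P *\<^sub>v xa + w)"
    by (rule add_scalar_prod_distrib[of _ a]) (use x z Px w in auto)
  also have "xa \<bullet> (P *\<^sub>v xa + w) = xa \<bullet> (P *\<^sub>v xa) + xa \<bullet> w"
    by (rule scalar_prod_add_distrib[of _ a]) (use x Px w in auto)
  also have "z \<bullet> (P *\<^sub>v xa + w) = z \<bullet> (P *\<^sub>v xa) + z \<bullet> w"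
    by (rule scalar_prod_add_distrib[of _ a]) (use z Px w in auto)
  also have "z \<bullet> (P *\<^sub>v xa) = xa \<bullet> w"
    using flip_sym[OF P(1) P(2) z x(1)] Pz by simp
  also have "z \<bullet> w = xc \<bullet> ((transpose_mat K * Q * K) *\<^sub>v xc)"
  proof -
    have "(transpose_mat K * Q * K) *\<^sub>v xc = (transpose_mat K * Q) *\<^sub>v w"
      unfolding w_def by (rule assoc_mult_mat_vec[of _ c a K c xc]) (use K Q x in auto)
    also have "\<dots> = transpose_mat K *\<^sub>v z"
      unfolding z_def by (rule assoc_mult_mat_vec[of _ c a Q a w]) (use K Q w in auto)
    finally have e: "(transpose_mat K * Q * K) *\<^sub>v xc = transpose_mat K *\<^sub>v z" .
    have "z \<bullet> (K *\<^sub>v xc) = xc \<bullet> (transpose_mat K *\<^sub>v z)"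
      by (rule flip_sp[OF K z x(2)])
    thus ?thesis unfolding e w_def .
  qed
  finally show ?thesis unfolding z_def w_def by simp
qed

lemma T_expand:
  fixes R :: "real mat"
  assumes c: "R \<in> carrier_mat c c" "U \<in> carrier_mat c c" "V \<in> carrier_mat c c" and x: "x \<in> carrier_vec c"
  shows "x \<bullet> (((R - U) + (R - V) - R) *\<^sub>v x) = x \<bullet> (R *\<^sub>v x) - x \<bullet> (U *\<^sub>v x) - x \<bullet> (V *\<^sub>v x)"
proof -
  have RU: "R - U \<in> carrier_mat c c" "R - V \<in> carrier_mat c c" "(R - U) + (R - V) \<in> carrier_mat c c"
    using c by auto
  have v: "R *\<^sub>v x \<in> carrier_vec c" "U *\<^sub>v x \<in> carrier_vec c" "V *\<^sub>v x \<in> carrier_vec c"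
    using c x by auto
  have "((R - U) + (R - V) - R) *\<^sub>v x = ((R - U) + (R - V)) *\<^sub>v x - R *\<^sub>v x"
    by (rule minus_mult_distrib_mat_vec[OF RU(3) c(1) x])
  also have "((R - U) + (R - V)) *\<^sub>v x = (R - U) *\<^sub>v x + (R - V) *\<^sub>v x"
    by (rule add_mult_distrib_mat_vec[OF RU(1) RU(2) x])
  also have "(R - U) *\<^sub>v x = R *\<^sub>v x - U *\<^sub>v x"
    by (rule minus_mult_distrib_mat_vec[OF c(1) c(2) x])
  also have "(R - V) *\<^sub>v x = R *\<^sub>v x - V *\<^sub>v x"
    by (rule minus_mult_distrib_mat_vec[OF c(1) c(3) x])
  finally have e: "((R - U) + (R - V) - R) *\<^sub>v x = (R *\<^sub>v x - U *\<^sub>v x) + (R *\<^sub>v x - V *\<^sub>v x) - R *\<^sub>v x" .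
  have "x \<bullet> ((R *\<^sub>v x - U *\<^sub>v x) + (R *\<^sub>v x - V *\<^sub>v x) - R *\<^sub>v x) =
     x \<bullet> ((R *\<^sub>v x - U *\<^sub>v x) + (R *\<^sub>v x - V *\<^sub>v x)) - x \<bullet> (R *\<^sub>v x)"
    by (rule scalar_prod_minus_distrib[of _ c]) (use x v in auto)
  also have "x \<bullet> ((R *\<^sub>v x - U *\<^sub>v x) + (R *\<^sub>v x - V *\<^sub>v x)) = 
     x \<bullet> (R *\<^sub>v x - U *\<^sub>v x) + x \<bullet> (R *\<^sub>v x - V *\<^sub>v x)"
    by (rule scalar_prod_add_distrib[of _ c]) (use x v in auto)
  also have "x \<bullet> (R *\<^sub>v x - U *\<^sub>v x) = x \<bullet> (R *\<^sub>v x) - x \<bullet> (U *\<^sub>v x)"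
    by (rule scalar_prod_minus_distrib[OF x v(1) v(2)])
  also have "x \<bullet> (R *\<^sub>v x - V *\<^sub>v x) = x \<bullet> (R *\<^sub>v x) - x \<bullet> (V *\<^sub>v x)"
    by (rule scalar_prod_minus_distrib[OF x v(1) v(3)])
  finally show ?thesis unfolding e by simp
qed


lemma mat_zero_vec: "(A::real mat) \<in> carrier_mat r c \<Longrightarrow> A *\<^sub>v 0\<^sub>v c = 0\<^sub>v r"
  by (intro eq_vecI) (auto simp: scalar_prod_def)

lemma subC:
  assumes "M \<in> carrier_mat n n" "X \<subseteq> {0..<n}" "Y \<subseteq> {0..<n}"
  shows "sub M X Y \<in> carrier_mat (card X) (card Y)"
proof (rule carrier_matI)
  have d: "dim_row M = n" "dim_col M = n" using assms(1) by auto
  show "dim_row (sub M X Y) = card X" unfolding dim_submatrix d by (rule card_sub_eq[OF assms(2)])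
  show "dim_col (sub M X Y) = card Y" unfolding dim_submatrix d by (rule card_sub_eq[OF assms(3)])
qed

lemma subT:
  fixes M :: "real mat"
  assumes Mc: "M \<in> carrier_mat n n" and MT: "transpose_mat M = M" and X: "X \<subseteq> {0..<n}" "Y \<subseteq> {0..<n}"
  shows "transpose_mat (sub M X Y) = sub M Y X"
proof -
  have c1: "transpose_mat (selm n X) * M \<in> carrier_mat (card X) n" by (rule mult_carrier_mat[OF _ Mc]) simp
  have c2: "transpose_mat (selm n Y) \<in> carrier_mat (card Y) n" by simp
  have "transpose_mat (sub M X Y) = transpose_mat ((transpose_mat (selm n X) * M) * selm n Y)"
    unfolding selm_sub[OF X Mc] ..
  also have "\<dots> = transpose_mat (selm n Y) * transpose_mat (transpose_mat (selm n X) * M)"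
    by (rule transpose_mult[OF c1 selm_carrier])
  also have "transpose_mat (transpose_mat (selm n X) * M) = transpose_mat M * transpose_mat (transpose_mat (selm n X))"
    by (rule transpose_mult[of _ "card X" n]) (use Mc in auto)
  also have "\<dots> = M * selm n X" using MT by simp
  also have "transpose_mat (selm n Y) * (M * selm n X) = (transpose_mat (selm n Y) * M) * selm n X"
    by (rule assoc_mult_mat[OF c2 Mc selm_carrier, symmetric])
  also have "\<dots> = sub M Y X" unfolding selm_sub[OF X(2) X(1) Mc] ..
  finally show ?thesis .
qed

lemma pd_sub:
  fixes M :: "real mat"
  assumes pd: "pos_def M" and Mc: "M \<in> carrier_mat n n" and X: "X \<subseteq> {0..<n}"
  shows "pos_def (sub M X X)"
proof -
  have MT: "transpose_mat M = M" using pd unfolding pos_def_def by blast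
  have dM: "dim_row M = n" using Mc by auto
  have pos: "\<forall>v \<in> carrier_vec n. v \<noteq> 0\<^sub>v n \<longrightarrow> v \<bullet> (M *\<^sub>v v) > 0"
    using pd unfolding pos_def_def dM by blast
  have c: "sub M X X \<in> carrier_mat (card X) (card X)" by (rule subC[OF Mc X X])
  hence d: "dim_row (sub M X X) = card X" by auto
  show ?thesis unfolding pos_def_def d
  proof (intro conjI ballI impI)
    show "sub M X X \<in> carrier_mat (card X) (card X)" by (rule c)
    show "transpose_mat (sub M X X) = sub M X X" by (rule subT[OF Mc MT X X])
    fix x :: "real vec" assume x: "x \<in> carrier_vec (card X)" "x \<noteq> 0\<^sub>v (card X)"
    have e: "x \<bullet> (sub M X X *\<^sub>v x) = (selm n X *\<^sub>v x) \<bullet> (M *\<^sub>v (selm n X *\<^sub>v x))"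
      by (rule selm_vec[OF X X Mc x(1) x(1)])
    have "selm n X *\<^sub>v x \<noteq> 0\<^sub>v n"
    proof
      assume h: "selm n X *\<^sub>v x = 0\<^sub>v n"
      have "x = transpose_mat (selm n X) *\<^sub>v (selm n X *\<^sub>v x)" by (rule selm_coord_same[OF X x(1), symmetric])
      also have "\<dots> = 0\<^sub>v (card X)" unfolding h by (rule mat_zero_vec) simp
      finally show False using x(2) by contradiction
    qed
    moreover have "selm n X *\<^sub>v x \<in> carrier_vec n" by simp
    ultimately have "(selm n X *\<^sub>v x) \<bullet> (M *\<^sub>v (selm n X *\<^sub>v x)) > 0" using pos by blast
    thus "x \<bullet> (sub M X X *\<^sub>v x) > 0" unfolding e .
  qed
qed

lemma Qform:
  fixes M :: "real mat"
  assumes Mc: "M \<in> carrier_mat n n" and MT: "transpose_mat M = M"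
    and X: "A \<subseteq> {0..<n}" "B \<subseteq> {0..<n}" "C \<subseteq> {0..<n}"
    and AB0: "sub M A B = 0\<^sub>m (card A) (card B)"
    and x: "xa \<in> carrier_vec (card A)" "xb \<in> carrier_vec (card B)" "xc \<in> carrier_vec (card C)"
  shows "(selm n A *\<^sub>v xa + selm n B *\<^sub>v xb + selm n C *\<^sub>v xc) \<bullet> (M *\<^sub>v (selm n A *\<^sub>v xa + selm n B *\<^sub>v xb + selm n C *\<^sub>v xc))
     = xa \<bullet> (sub M A A *\<^sub>v xa) + xb \<bullet> (sub M B B *\<^sub>v xb) + xc \<bullet> (sub M C C *\<^sub>v xc)
       + 2 * (xa \<bullet> (sub M A C *\<^sub>v xc)) + 2 * (xb \<bullet> (sub M B C *\<^sub>v xc))"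
proof -
  define u1 where "u1 = selm n A *\<^sub>v xa"
  define u2 where "u2 = selm n B *\<^sub>v xb"
  define u3 where "u3 = selm n C *\<^sub>v xc"
  have u: "u1 \<in> carrier_vec n" "u2 \<in> carrier_vec n" "u3 \<in> carrier_vec n" unfolding u1_def u2_def u3_def by simp_all
  have e: "(u1 + u2 + u3) \<bullet> (M *\<^sub>v (u1 + u2 + u3)) =
    u1 \<bullet> (M *\<^sub>v u1) + u1 \<bullet> (M *\<^sub>v u2) + u1 \<bullet> (M *\<^sub>v u3) +
    (u2 \<bullet> (M *\<^sub>v u1) + u2 \<bullet> (M *\<^sub>v u2) + u2 \<bullet> (M *\<^sub>v u3)) +
    (u3 \<bullet> (M *\<^sub>v u1) + u3 \<bullet> (M *\<^sub>v u2) + u3 \<bullet> (M *\<^sub>v u3))"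
    by (rule exp3[OF Mc u])
  have f1: "u2 \<bullet> (M *\<^sub>v u1) = u1 \<bullet> (M *\<^sub>v u2)" by (rule flip_sym[OF Mc MT u(2) u(1)])
  have f2: "u3 \<bullet> (M *\<^sub>v u1) = u1 \<bullet> (M *\<^sub>v u3)" by (rule flip_sym[OF Mc MT u(3) u(1)])
  have f3: "u3 \<bullet> (M *\<^sub>v u2) = u2 \<bullet> (M *\<^sub>v u3)" by (rule flip_sym[OF Mc MT u(3) u(2)])
  have t11: "u1 \<bullet> (M *\<^sub>v u1) = xa \<bullet> (sub M A A *\<^sub>v xa)"
    unfolding u1_def by (rule selm_vec[OF X(1) X(1) Mc x(1) x(1), symmetric])
  have t22: "u2 \<bullet> (M *\<^sub>v u2) = xb \<bullet> (sub M B B *\<^sub>v xb)"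
    unfolding u2_def by (rule selm_vec[OF X(2) X(2) Mc x(2) x(2), symmetric])
  have t33: "u3 \<bullet> (M *\<^sub>v u3) = xc \<bullet> (sub M C C *\<^sub>v xc)"
    unfolding u3_def by (rule selm_vec[OF X(3) X(3) Mc x(3) x(3), symmetric])
  have t13: "u1 \<bullet> (M *\<^sub>v u3) = xa \<bullet> (sub M A C *\<^sub>v xc)"
    unfolding u1_def u3_def by (rule selm_vec[OF X(1) X(3) Mc x(1) x(3), symmetric])
  have t23: "u2 \<bullet> (M *\<^sub>v u3) = xb \<bullet> (sub M B C *\<^sub>v xc)"
    unfolding u2_def u3_def by (rule selm_vec[OF X(2) X(3) Mc x(2) x(3), symmetric])
  have t12: "u1 \<bullet> (M *\<^sub>v u2) = 0"
  proof -
    have "u1 \<bullet> (M *\<^sub>v u2) = xa \<bullet> (sub M A B *\<^sub>v xb)"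
      unfolding u1_def u2_def by (rule selm_vec[OF X(1) X(2) Mc x(1) x(2), symmetric])
    also have "sub M A B *\<^sub>v xb = 0\<^sub>v (card A)" unfolding AB0 by (rule zero_mat_mult_vec'[OF x(2)])
    also have "xa \<bullet> 0\<^sub>v (card A) = 0" by (rule scalar_prod_right_zero[OF x(1)])
    finally show ?thesis .
  qed
  have "(u1 + u2 + u3) \<bullet> (M *\<^sub>v (u1 + u2 + u3)) = xa \<bullet> (sub M A A *\<^sub>v xa) + xb \<bullet> (sub M B B *\<^sub>v xb) + xc \<bullet> (sub M C C *\<^sub>v xc)
       + 2 * (xa \<bullet> (sub M A C *\<^sub>v xc)) + 2 * (xb \<bullet> (sub M B C *\<^sub>v xc))"
    unfolding e f1 f2 f3 t11 t22 t33 t13 t23 t12 by simp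
  thus ?thesis unfolding u1_def u2_def u3_def .
qed

lemma schur_carrier:
  assumes "K \<in> carrier_mat a c" "(Q::real mat) \<in> carrier_mat a a"
  shows "transpose_mat K * Q * K \<in> carrier_mat c c"
proof -
  have "transpose_mat K \<in> carrier_mat c a" using assms(1) by simp
  hence "transpose_mat K * Q \<in> carrier_mat c a" by (rule mult_carrier_mat[OF _ assms(2)])
  thus ?thesis by (rule mult_carrier_mat[OF _ assms(1)])
qed

lemma transpose_schur:
  fixes R :: "real mat"
  assumes R: "R \<in> carrier_mat c c" "transpose_mat R = R" and K: "K \<in> carrier_mat a c"
    and Q: "Q \<in> carrier_mat a a" "transpose_mat Q = Q"
  shows "transpose_mat (R - transpose_mat K * Q * K) = R - transpose_mat K * Q * K"
proof -
  have c1: "transpose_mat K * Q \<in> carrier_mat c a" using K Q by simp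
  have c2: "transpose_mat K * Q * K \<in> carrier_mat c c" using K Q by simp
  have "transpose_mat (transpose_mat K * Q * K) = transpose_mat K * transpose_mat (transpose_mat K * Q)"
    by (rule transpose_mult[OF c1 K])
  also have "transpose_mat (transpose_mat K * Q) = transpose_mat Q * transpose_mat (transpose_mat K)"
    by (rule transpose_mult[of _ c a]) (use K Q in auto)
  also have "\<dots> = Q * K" using Q by simp
  also have "transpose_mat K * (Q * K) = transpose_mat K * Q * K"
    by (rule assoc_mult_mat[of _ c a _ a _ c, symmetric]) (use K Q in auto)
  finally have e: "transpose_mat (transpose_mat K * Q * K) = transpose_mat K * Q * K" .
  have "transpose_mat (R - transpose_mat K * Q * K) = transpose_mat R - transpose_mat (transpose_mat K * Q * K)"
    by (rule transpose_minus[OF R(1) c2])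
  thus ?thesis unfolding e R(2) .
qed

theorem proposition2:
  fixes n :: nat and E :: "(nat \<times> nat) set" and A B C :: "nat set" and N :: "real mat"
  assumes graph: "E \<subseteq> {0..<n} \<times> {0..<n}" "sym E"
    and nonempty: "A \<noteq> {}" "B \<noteq> {}" "C \<noteq> {}"
    and disjoint: "A \<inter> B = {}" "A \<inter> C = {}" "B \<inter> C = {}"
    and cover: "A \<union> B \<union> C = {0..<n}"
    and sep: "separates E C A B"
    and compl: "complete_in E C"
    and N: "N \<in> carrier_mat n n" "pos_def N"
  defines "M \<equiv> restrict_graph E N"
  defines "S1 \<equiv> sub M C C - sub M C A * mat_inv (sub M A A) * sub M A C"
      and "S2 \<equiv> sub M C C - sub M C B * mat_inv (sub M B B) * sub M B C"
  shows "(pos_def M \<longleftrightarrow>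
            pos_def (four_block_mat (sub M A A) (sub M A C) (sub M C A) (sub M C C)) \<and>
            pos_def (four_block_mat (sub M C C) (sub M C B) (sub M B C) (sub M B B)) \<and>
            pos_def (S1 + S2 - sub M C C))
       \<and> (pos_def M \<longleftrightarrow>
            pos_def (sub M A A) \<and> pos_def (sub M B B) \<and> pos_def (S1 + S2 - sub M C C))"
proof -
  let ?AA = "sub M A A" and ?BB = "sub M B B" and ?CC = "sub M C C"
  let ?AC = "sub M A C" and ?CA = "sub M C A" and ?BC = "sub M B C" and ?CB = "sub M C B"
  let ?SA = "selm n A" and ?SB = "selm n B" and ?SC = "selm n C"
  let ?T = "S1 + S2 - ?CC"
  have X: "A \<subseteq> {0..<n}" "B \<subseteq> {0..<n}" "C \<subseteq> {0..<n}" using cover by auto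
  have Mc: "M \<in> carrier_mat n n" using N(1) unfolding M_def restrict_graph_def by auto
  have dM: "dim_row M = n" "dim_col M = n" using Mc by auto
  have NT: "transpose_mat N = N" using N(2) unfolding pos_def_def by blast
  have MT: "transpose_mat M = M"
  proof (rule eq_matI)
    fix i j assume "i < dim_row M" "j < dim_col M"
    hence ij: "i < n" "j < n" using dM by auto
    have "transpose_mat N $$ (i,j) = N $$ (j,i)" using ij N(1) by simp
    hence Nji: "N $$ (j,i) = N $$ (i,j)" using NT by simp
    have Es: "(j,i) \<in> E \<longleftrightarrow> (i,j) \<in> E" using graph(2) unfolding sym_def by blast
    have "transpose_mat M $$ (i,j) = M $$ (j,i)" using ij dM by simp
    also have "\<dots> = M $$ (i,j)" using ij N(1) Nji Es unfolding M_def restrict_graph_def by auto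
    finally show "transpose_mat M $$ (i,j) = M $$ (i,j)" .
  qed (use dM in auto)
  have AB0: "sub M A B = 0\<^sub>m (card A) (card B)"
  proof (rule eq_matI)
    fix k l assume "k < dim_row (0\<^sub>m (card A) (card B) :: real mat)" "l < dim_col (0\<^sub>m (card A) (card B) :: real mat)"
    hence kl: "k < card A" "l < card B" by auto
    define i where "i = pick A k"
    define j where "j = pick B l"
    have i: "i \<in> A" "i < n" unfolding i_def by (rule pick_facts[OF X(1) kl(1)])+
    have j: "j \<in> B" "j < n" unfolding j_def by (rule pick_facts[OF X(2) kl(2)])+
    have ne: "i \<noteq> j" using disjoint(1) i j by auto
    have nE: "(i, j) \<notin> E"
    proof
      assume e: "(i, j) \<in> E"
      have w: "graph_walk E [i, j]" unfolding graph_walk_def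
      proof (intro conjI allI impI)
        fix t assume "Suc t < length [i, j]"
        hence "t = 0" by simp
        thus "([i, j] ! t, [i, j] ! Suc t) \<in> E" using e by simp
      qed simp
      have "set [i, j] \<inter> C \<noteq> {}" using sep w ne i(1) j(1) unfolding separates_def by auto
      thus False using i(1) j(1) disjoint by auto
    qed
    have "sub M A B $$ (k, l) = M $$ (i, j)" unfolding i_def j_def
      by (rule submatrix_index) (use kl dM card_sub_eq[OF X(1)] card_sub_eq[OF X(2)] in auto)
    also have "\<dots> = 0" using ne nE i j N(1) unfolding M_def restrict_graph_def by simp
    finally show "sub M A B $$ (k, l) = 0\<^sub>m (card A) (card B) $$ (k, l)" using kl by simp
  qed (use subC[OF Mc X(1) X(2)] in auto)
  have cAA: "?AA \<in> carrier_mat (card A) (card A)" by (rule subC[OF Mc X(1) X(1)])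
  have cBB: "?BB \<in> carrier_mat (card B) (card B)" by (rule subC[OF Mc X(2) X(2)])
  have cCC: "?CC \<in> carrier_mat (card C) (card C)" by (rule subC[OF Mc X(3) X(3)])
  have cAC: "?AC \<in> carrier_mat (card A) (card C)" by (rule subC[OF Mc X(1) X(3)])
  have cCA: "?CA \<in> carrier_mat (card C) (card A)" by (rule subC[OF Mc X(3) X(1)])
  have cBC: "?BC \<in> carrier_mat (card B) (card C)" by (rule subC[OF Mc X(2) X(3)])
  have cCB: "?CB \<in> carrier_mat (card C) (card B)" by (rule subC[OF Mc X(3) X(2)])
  have tAA: "transpose_mat ?AA = ?AA" by (rule subT[OF Mc MT X(1) X(1)])
  have tBB: "transpose_mat ?BB = ?BB" by (rule subT[OF Mc MT X(2) X(2)])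
  have tCC: "transpose_mat ?CC = ?CC" by (rule subT[OF Mc MT X(3) X(3)])
  have tAC: "transpose_mat ?AC = ?CA" by (rule subT[OF Mc MT X(1) X(3)])
  have tCA: "transpose_mat ?CA = ?AC" by (rule subT[OF Mc MT X(3) X(1)])
  have tBC: "transpose_mat ?BC = ?CB" by (rule subT[OF Mc MT X(2) X(3)])
  have tCB: "transpose_mat ?CB = ?BC" by (rule subT[OF Mc MT X(3) X(2)])
  have S1': "S1 = ?CC - transpose_mat ?AC * mat_inv ?AA * ?AC" unfolding S1_def tAC ..
  have S2': "S2 = ?CC - transpose_mat ?BC * mat_inv ?BB * ?BC" unfolding S2_def tBC ..
  note QF = Qform[OF Mc MT X AB0]
  note CO = coord3[OF X disjoint]
  have flipAC: "\<And>xa xc. xa \<in> carrier_vec (card A) \<Longrightarrow> xc \<in> carrier_vec (card C) \<Longrightarrow>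
      xc \<bullet> (?CA *\<^sub>v xa) = xa \<bullet> (?AC *\<^sub>v xc)"
    using flip_sp[OF cCA] tCA by simp
  have flipBC: "\<And>xb xc. xb \<in> carrier_vec (card B) \<Longrightarrow> xc \<in> carrier_vec (card C) \<Longrightarrow>
      xc \<bullet> (?CB *\<^sub>v xb) = xb \<bullet> (?BC *\<^sub>v xc)"
    using flip_sp[OF cCB] tCB by simp
  have vzero: "\<And>xa xb xc. xa \<in> carrier_vec (card A) \<Longrightarrow> xb \<in> carrier_vec (card B) \<Longrightarrow> xc \<in> carrier_vec (card C) \<Longrightarrow>
      ?SA *\<^sub>v xa + ?SB *\<^sub>v xb + ?SC *\<^sub>v xc = 0\<^sub>v n \<Longrightarrow> xa = 0\<^sub>v (card A) \<and> xb = 0\<^sub>v (card B) \<and> xc = 0\<^sub>v (card C)"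
  proof -
    fix xa xb xc assume x: "xa \<in> carrier_vec (card A)" "xb \<in> carrier_vec (card B)" "xc \<in> carrier_vec (card C)"
      and z: "?SA *\<^sub>v xa + ?SB *\<^sub>v xb + ?SC *\<^sub>v xc = 0\<^sub>v n"
    have "xa = transpose_mat ?SA *\<^sub>v 0\<^sub>v n" using CO(1)[OF x] z by simp
    moreover have "xb = transpose_mat ?SB *\<^sub>v 0\<^sub>v n" using CO(2)[OF x] z by simp
    moreover have "xc = transpose_mat ?SC *\<^sub>v 0\<^sub>v n" using CO(3)[OF x] z by simp
    ultimately show "xa = 0\<^sub>v (card A) \<and> xb = 0\<^sub>v (card B) \<and> xc = 0\<^sub>v (card C)"
      using mat_zero_vec[of "transpose_mat ?SA" "card A" n] mat_zero_vec[of "transpose_mat ?SB" "card B" n]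
        mat_zero_vec[of "transpose_mat ?SC" "card C" n] by simp
  qed
  have vcar: "\<And>xa xb xc. ?SA *\<^sub>v xa + ?SB *\<^sub>v xb + ?SC *\<^sub>v xc \<in> carrier_vec n" by simp
  have E2: "pos_def M \<longleftrightarrow> pos_def ?AA \<and> pos_def ?BB \<and> pos_def ?T"
  proof
    assume pdM: "pos_def M"
    have posM: "\<forall>v \<in> carrier_vec n. v \<noteq> 0\<^sub>v n \<longrightarrow> v \<bullet> (M *\<^sub>v v) > 0"
      using pdM unfolding pos_def_def dM by blast
    have pAA: "pos_def ?AA" by (rule pd_sub[OF pdM Mc X(1)])
    have pBB: "pos_def ?BB" by (rule pd_sub[OF pdM Mc X(2)])
    have iA: "mat_inv ?AA \<in> carrier_mat (card A) (card A) \<and> ?AA * mat_inv ?AA = 1\<^sub>m (card A)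
        \<and> mat_inv ?AA * ?AA = 1\<^sub>m (card A) \<and> transpose_mat (mat_inv ?AA) = mat_inv ?AA"
      by (rule pd_inv[OF pAA cAA])
    have iB: "mat_inv ?BB \<in> carrier_mat (card B) (card B) \<and> ?BB * mat_inv ?BB = 1\<^sub>m (card B)
        \<and> mat_inv ?BB * ?BB = 1\<^sub>m (card B) \<and> transpose_mat (mat_inv ?BB) = mat_inv ?BB"
      by (rule pd_inv[OF pBB cBB])
    let ?UA = "transpose_mat ?AC * mat_inv ?AA * ?AC"
    let ?UB = "transpose_mat ?BC * mat_inv ?BB * ?BC"
    have cUA: "?UA \<in> carrier_mat (card C) (card C)" by (rule schur_carrier[OF cAC]) (use iA in blast)
    have cUB: "?UB \<in> carrier_mat (card C) (card C)" by (rule schur_carrier[OF cBC]) (use iB in blast)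
    have Teq: "?T = (?CC - ?UA) + (?CC - ?UB) - ?CC" unfolding S1' S2' ..
    have cT: "?T \<in> carrier_mat (card C) (card C)" unfolding Teq
      by (intro minus_carrier_mat add_carrier_mat) (use cCC in auto)
    have tS1: "transpose_mat (?CC - ?UA) = ?CC - ?UA"
      by (rule transpose_schur[OF cCC tCC cAC]) (use iA in auto)
    have tS2: "transpose_mat (?CC - ?UB) = ?CC - ?UB"
      by (rule transpose_schur[OF cCC tCC cBC]) (use iB in auto)
    have tT: "transpose_mat ?T = ?T" unfolding Teq
    proof -
      have c1: "?CC - ?UA \<in> carrier_mat (card C) (card C)" by (rule minus_carrier_mat[OF cUA])
      have c2: "?CC - ?UB \<in> carrier_mat (card C) (card C)" by (rule minus_carrier_mat[OF cUB])
      have "transpose_mat ((?CC - ?UA) + (?CC - ?UB) - ?CC) = transpose_mat ((?CC - ?UA) + (?CC - ?UB)) - transpose_mat ?CC"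
        by (rule transpose_minus[OF _ cCC]) (use c1 c2 in auto)
      also have "transpose_mat ((?CC - ?UA) + (?CC - ?UB)) = transpose_mat (?CC - ?UA) + transpose_mat (?CC - ?UB)"
        by (rule transpose_add[OF c1 c2])
      finally show "transpose_mat ((?CC - ?UA) + (?CC - ?UB) - ?CC) = (?CC - ?UA) + (?CC - ?UB) - ?CC"
        unfolding tS1 tS2 tCC .
    qed
    have dT: "dim_row ?T = card C" using cT by auto
    have pT: "pos_def ?T" unfolding pos_def_def dT
    proof (intro conjI ballI impI)
      show "?T \<in> carrier_mat (card C) (card C)" by (rule cT)
      show "transpose_mat ?T = ?T" by (rule tT)
      fix xc :: "real vec" assume xc: "xc \<in> carrier_vec (card C)" "xc \<noteq> 0\<^sub>v (card C)"
      define za where "za = mat_inv ?AA *\<^sub>v (?AC *\<^sub>v xc)"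
      define zb where "zb = mat_inv ?BB *\<^sub>v (?BC *\<^sub>v xc)"
      have za: "za \<in> carrier_vec (card A)" unfolding za_def using iA cAC xc by auto
      have zb: "zb \<in> carrier_vec (card B)" unfolding zb_def using iB cBC xc by auto
      have xa: "- za \<in> carrier_vec (card A)" using za by simp
      have xb: "- zb \<in> carrier_vec (card B)" using zb by simp
      have sA: "(- za + za) \<bullet> (?AA *\<^sub>v (- za + za)) = (- za) \<bullet> (?AA *\<^sub>v (- za)) + 2 * ((- za) \<bullet> (?AC *\<^sub>v xc)) + xc \<bullet> (?UA *\<^sub>v xc)"
        unfolding za_def by (rule schur[OF cAA tAA _ _ _ cAC _ xc(1)]) (use iA za in \<open>auto simp: za_def\<close>)
      have sB: "(- zb + zb) \<bullet> (?BB *\<^sub>v (- zb + zb)) = (- zb) \<bullet> (?BB *\<^sub>v (- zb)) + 2 * ((- zb) \<bullet> (?BC *\<^sub>v xc)) + xc \<bullet> (?UB *\<^sub>v xc)"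
        unfolding zb_def by (rule schur[OF cBB tBB _ _ _ cBC _ xc(1)]) (use iB zb in \<open>auto simp: zb_def\<close>)
      have zA: "(- za + za) \<bullet> (?AA *\<^sub>v (- za + za)) = 0"
        using za cAA by (simp add: mat_zero_vec)
      have zB: "(- zb + zb) \<bullet> (?BB *\<^sub>v (- zb + zb)) = 0"
        using zb cBB by (simp add: mat_zero_vec)
      have te: "xc \<bullet> (?T *\<^sub>v xc) = xc \<bullet> (?CC *\<^sub>v xc) - xc \<bullet> (?UA *\<^sub>v xc) - xc \<bullet> (?UB *\<^sub>v xc)"
        unfolding Teq by (rule T_expand[OF cCC cUA cUB xc(1)])
      define v where "v = ?SA *\<^sub>v (- za) + ?SB *\<^sub>v (- zb) + ?SC *\<^sub>v xc"
      have qv: "v \<bullet> (M *\<^sub>v v) = (- za) \<bullet> (?AA *\<^sub>v (- za)) + (- zb) \<bullet> (?BB *\<^sub>v (- zb)) + xc \<bullet> (?CC *\<^sub>v xc)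
         + 2 * ((- za) \<bullet> (?AC *\<^sub>v xc)) + 2 * ((- zb) \<bullet> (?BC *\<^sub>v xc))"
        unfolding v_def by (rule QF[OF xa xb xc(1)])
      have "v \<noteq> 0\<^sub>v n" using vzero[OF xa xb xc(1)] xc(2) unfolding v_def by blast
      moreover have "v \<in> carrier_vec n" unfolding v_def by simp
      ultimately have "v \<bullet> (M *\<^sub>v v) > 0" using posM by blast
      thus "xc \<bullet> (?T *\<^sub>v xc) > 0" using qv te sA sB zA zB by linarith
    qed
    show "pos_def ?AA \<and> pos_def ?BB \<and> pos_def ?T" using pAA pBB pT by blast
  next
    assume h: "pos_def ?AA \<and> pos_def ?BB \<and> pos_def ?T"
    hence pAA: "pos_def ?AA" and pBB: "pos_def ?BB" and pT: "pos_def ?T" by blast+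
    have iA: "mat_inv ?AA \<in> carrier_mat (card A) (card A) \<and> ?AA * mat_inv ?AA = 1\<^sub>m (card A)
        \<and> mat_inv ?AA * ?AA = 1\<^sub>m (card A) \<and> transpose_mat (mat_inv ?AA) = mat_inv ?AA"
      by (rule pd_inv[OF pAA cAA])
    have iB: "mat_inv ?BB \<in> carrier_mat (card B) (card B) \<and> ?BB * mat_inv ?BB = 1\<^sub>m (card B)
        \<and> mat_inv ?BB * ?BB = 1\<^sub>m (card B) \<and> transpose_mat (mat_inv ?BB) = mat_inv ?BB"
      by (rule pd_inv[OF pBB cBB])
    let ?UA = "transpose_mat ?AC * mat_inv ?AA * ?AC"
    let ?UB = "transpose_mat ?BC * mat_inv ?BB * ?BC"
    have cUA: "?UA \<in> carrier_mat (card C) (card C)" by (rule schur_carrier[OF cAC]) (use iA in blast)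
    have cUB: "?UB \<in> carrier_mat (card C) (card C)" by (rule schur_carrier[OF cBC]) (use iB in blast)
    have Teq: "?T = (?CC - ?UA) + (?CC - ?UB) - ?CC" unfolding S1' S2' ..
    have dAA: "dim_row ?AA = card A" using cAA by auto
    have dBB: "dim_row ?BB = card B" using cBB by auto
    have cT: "?T \<in> carrier_mat (card C) (card C)" unfolding Teq
      by (intro minus_carrier_mat add_carrier_mat) (use cCC in auto)
    have dT: "dim_row ?T = card C" using cT by auto
    have posA: "\<forall>v \<in> carrier_vec (card A). v \<noteq> 0\<^sub>v (card A) \<longrightarrow> v \<bullet> (?AA *\<^sub>v v) > 0"
      using pAA unfolding pos_def_def dAA by blast
    have posB: "\<forall>v \<in> carrier_vec (card B). v \<noteq> 0\<^sub>v (card B) \<longrightarrow> v \<bullet> (?BB *\<^sub>v v) > 0"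
      using pBB unfolding pos_def_def dBB by blast
    have posT: "\<forall>v \<in> carrier_vec (card C). v \<noteq> 0\<^sub>v (card C) \<longrightarrow> v \<bullet> (?T *\<^sub>v v) > 0"
      using pT unfolding pos_def_def dT by blast
    show "pos_def M" unfolding pos_def_def dM
    proof (intro conjI ballI impI)
      show "M \<in> carrier_mat n n" by (rule Mc)
      show "transpose_mat M = M" by (rule MT)
      fix v :: "real vec" assume v: "v \<in> carrier_vec n" "v \<noteq> 0\<^sub>v n"
      define xa where "xa = transpose_mat ?SA *\<^sub>v v"
      define xb where "xb = transpose_mat ?SB *\<^sub>v v"
      define xc where "xc = transpose_mat ?SC *\<^sub>v v"
      have x: "xa \<in> carrier_vec (card A)" "xb \<in> carrier_vec (card B)" "xc \<in> carrier_vec (card C)"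
        unfolding xa_def xb_def xc_def using v(1) by (auto intro!: mult_mat_vec_carrier[of _ _ n])
      have vd: "v = ?SA *\<^sub>v xa + ?SB *\<^sub>v xb + ?SC *\<^sub>v xc"
        unfolding xa_def xb_def xc_def by (rule decomp3[OF X disjoint cover v(1)])
      define ya where "ya = xa + mat_inv ?AA *\<^sub>v (?AC *\<^sub>v xc)"
      define yb where "yb = xb + mat_inv ?BB *\<^sub>v (?BC *\<^sub>v xc)"
      have ya: "ya \<in> carrier_vec (card A)" unfolding ya_def using x iA cAC by auto
      have yb: "yb \<in> carrier_vec (card B)" unfolding yb_def using x iB cBC by auto
      have sA: "ya \<bullet> (?AA *\<^sub>v ya) = xa \<bullet> (?AA *\<^sub>v xa) + 2 * (xa \<bullet> (?AC *\<^sub>v xc)) + xc \<bullet> (?UA *\<^sub>v xc)"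
        unfolding ya_def by (rule schur[OF cAA tAA _ _ _ cAC x(1) x(3)]) (use iA in auto)
      have sB: "yb \<bullet> (?BB *\<^sub>v yb) = xb \<bullet> (?BB *\<^sub>v xb) + 2 * (xb \<bullet> (?BC *\<^sub>v xc)) + xc \<bullet> (?UB *\<^sub>v xc)"
        unfolding yb_def by (rule schur[OF cBB tBB _ _ _ cBC x(2) x(3)]) (use iB in auto)
      have te: "xc \<bullet> (?T *\<^sub>v xc) = xc \<bullet> (?CC *\<^sub>v xc) - xc \<bullet> (?UA *\<^sub>v xc) - xc \<bullet> (?UB *\<^sub>v xc)"
        unfolding Teq by (rule T_expand[OF cCC cUA cUB x(3)])
      have qv: "v \<bullet> (M *\<^sub>v v) = xa \<bullet> (?AA *\<^sub>v xa) + xb \<bullet> (?BB *\<^sub>v xb) + xc \<bullet> (?CC *\<^sub>v xc)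
         + 2 * (xa \<bullet> (?AC *\<^sub>v xc)) + 2 * (xb \<bullet> (?BC *\<^sub>v xc))"
        unfolding vd by (rule QF[OF x])
      have key: "v \<bullet> (M *\<^sub>v v) = ya \<bullet> (?AA *\<^sub>v ya) + yb \<bullet> (?BB *\<^sub>v yb) + xc \<bullet> (?T *\<^sub>v xc)"
        using qv sA sB te by linarith
      have nA: "ya \<bullet> (?AA *\<^sub>v ya) \<ge> 0" by (rule pd_nonneg[OF pAA]) (use ya dAA in simp)
      have nB: "yb \<bullet> (?BB *\<^sub>v yb) \<ge> 0" by (rule pd_nonneg[OF pBB]) (use yb dBB in simp)
      have nT: "xc \<bullet> (?T *\<^sub>v xc) \<ge> 0" by (rule pd_nonneg[OF pT]) (use x dT in simp)
      show "v \<bullet> (M *\<^sub>v v) > 0"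
      proof (cases "xc = 0\<^sub>v (card C)")
        case False
        hence "xc \<bullet> (?T *\<^sub>v xc) > 0" using posT x(3) by blast
        thus ?thesis using key nA nB by linarith
      next
        case True
        have "mat_inv ?AA *\<^sub>v (?AC *\<^sub>v xc) = 0\<^sub>v (card A)"
          unfolding True using mat_zero_vec[OF cAC] mat_zero_vec[of "mat_inv ?AA" "card A" "card A"] iA by simp
        hence yax: "ya = xa" unfolding ya_def using x(1) by simp
        have "mat_inv ?BB *\<^sub>v (?BC *\<^sub>v xc) = 0\<^sub>v (card B)"
          unfolding True using mat_zero_vec[OF cBC] mat_zero_vec[of "mat_inv ?BB" "card B" "card B"] iB by simp
        hence ybx: "yb = xb" unfolding yb_def using x(2) by simp
        have "xa \<noteq> 0\<^sub>v (card A) \<or> xb \<noteq> 0\<^sub>v (card B)"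
        proof (rule ccontr)
          assume "\<not> (xa \<noteq> 0\<^sub>v (card A) \<or> xb \<noteq> 0\<^sub>v (card B))"
          hence z: "xa = 0\<^sub>v (card A)" "xb = 0\<^sub>v (card B)" by auto
          have "v = ?SA *\<^sub>v 0\<^sub>v (card A) + ?SB *\<^sub>v 0\<^sub>v (card B) + ?SC *\<^sub>v 0\<^sub>v (card C)"
            using vd z True by simp
          also have "\<dots> = 0\<^sub>v n" 
            using mat_zero_vec[of ?SA n "card A"] mat_zero_vec[of ?SB n "card B"] mat_zero_vec[of ?SC n "card C"] by simp
          finally show False using v(2) by contradiction
        qed
        thus ?thesis
        proof
          assume "xa \<noteq> 0\<^sub>v (card A)"
          hence "ya \<bullet> (?AA *\<^sub>v ya) > 0" using posA x(1) yax by blast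
          thus ?thesis using key nB nT by linarith
        next
          assume "xb \<noteq> 0\<^sub>v (card B)"
          hence "yb \<bullet> (?BB *\<^sub>v yb) > 0" using posB x(2) ybx by blast
          thus ?thesis using key nA nT by linarith
        qed
      qed
    qed
  qed
  let ?F1 = "four_block_mat ?AA ?AC ?CA ?CC"
  let ?F2 = "four_block_mat ?CC ?CB ?BC ?BB"
  have cF1: "?F1 \<in> carrier_mat (card A + card C) (card A + card C)" by (rule four_block_carrier_mat[OF cAA cCC])
  have cF2: "?F2 \<in> carrier_mat (card C + card B) (card C + card B)" by (rule four_block_carrier_mat[OF cCC cBB])
  have dF1: "dim_row ?F1 = card A + card C" using cF1 by auto
  have dF2: "dim_row ?F2 = card C + card B" using cF2 by auto
  have tF1: "transpose_mat ?F1 = ?F1"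
    unfolding transpose_four_block_mat[OF cAA cAC cCA cCC] tAA tAC tCA tCC ..
  have tF2: "transpose_mat ?F2 = ?F2"
    unfolding transpose_four_block_mat[OF cCC cCB cBC cBB] tBB tBC tCB tCC ..
  have E1: "pos_def M \<longleftrightarrow> pos_def ?F1 \<and> pos_def ?F2 \<and> pos_def ?T"
  proof
    assume pdM: "pos_def M"
    have posM: "\<forall>v \<in> carrier_vec n. v \<noteq> 0\<^sub>v n \<longrightarrow> v \<bullet> (M *\<^sub>v v) > 0"
      using pdM unfolding pos_def_def dM by blast
    have pF1: "pos_def ?F1" unfolding pos_def_def dF1
    proof (intro conjI ballI impI)
      show "?F1 \<in> carrier_mat (card A + card C) (card A + card C)" by (rule cF1)
      show "transpose_mat ?F1 = ?F1" by (rule tF1)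
      fix x :: "real vec" assume x: "x \<in> carrier_vec (card A + card C)" "x \<noteq> 0\<^sub>v (card A + card C)"
      define xa where "xa = vec_first x (card A)"
      define xc where "xc = vec_last x (card C)"
      have xa: "xa \<in> carrier_vec (card A)" and xc: "xc \<in> carrier_vec (card C)" unfolding xa_def xc_def by simp_all
      have xe: "x = xa @\<^sub>v xc" unfolding xa_def xc_def by (rule vec_first_last_append[OF x(1), symmetric])
      have z: "0\<^sub>v (card B) \<in> carrier_vec (card B)" by simp
      have fq: "x \<bullet> (?F1 *\<^sub>v x) = xa \<bullet> (?AA *\<^sub>v xa) + xa \<bullet> (?AC *\<^sub>v xc) + (xc \<bullet> (?CA *\<^sub>v xa) + xc \<bullet> (?CC *\<^sub>v xc))"
        unfolding xe by (rule fb_quad[OF cAA cAC cCA cCC xa xc])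
      define v where "v = ?SA *\<^sub>v xa + ?SB *\<^sub>v 0\<^sub>v (card B) + ?SC *\<^sub>v xc"
      have qv: "v \<bullet> (M *\<^sub>v v) = xa \<bullet> (?AA *\<^sub>v xa) + 0\<^sub>v (card B) \<bullet> (?BB *\<^sub>v 0\<^sub>v (card B)) + xc \<bullet> (?CC *\<^sub>v xc)
         + 2 * (xa \<bullet> (?AC *\<^sub>v xc)) + 2 * (0\<^sub>v (card B) \<bullet> (?BC *\<^sub>v xc))"
        unfolding v_def by (rule QF[OF xa z xc])
      have z1: "0\<^sub>v (card B) \<bullet> (?BB *\<^sub>v 0\<^sub>v (card B)) = 0" by (rule scalar_prod_left_zero) (use cBB in simp)
      have z2: "0\<^sub>v (card B) \<bullet> (?BC *\<^sub>v xc) = 0" by (rule scalar_prod_left_zero) (use cBC xc in simp)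
      have fl: "xc \<bullet> (?CA *\<^sub>v xa) = xa \<bullet> (?AC *\<^sub>v xc)" by (rule flipAC[OF xa xc])
      have "v \<noteq> 0\<^sub>v n"
      proof
        assume "v = 0\<^sub>v n"
        hence "xa = 0\<^sub>v (card A) \<and> xc = 0\<^sub>v (card C)" using vzero[OF xa z xc] unfolding v_def by blast
        hence "x = 0\<^sub>v (card A + card C)" unfolding xe using append_zero_iff[OF xa xc] by blast
        thus False using x(2) by contradiction
      qed
      moreover have "v \<in> carrier_vec n" unfolding v_def by simp
      ultimately have "v \<bullet> (M *\<^sub>v v) > 0" using posM by blast
      thus "x \<bullet> (?F1 *\<^sub>v x) > 0" using fq qv z1 z2 fl by linarith
    qed
    have pF2: "pos_def ?F2" unfolding pos_def_def dF2
    proof (intro conjI ballI impI)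
      show "?F2 \<in> carrier_mat (card C + card B) (card C + card B)" by (rule cF2)
      show "transpose_mat ?F2 = ?F2" by (rule tF2)
      fix x :: "real vec" assume x: "x \<in> carrier_vec (card C + card B)" "x \<noteq> 0\<^sub>v (card C + card B)"
      define xc where "xc = vec_first x (card C)"
      define xb where "xb = vec_last x (card B)"
      have xc: "xc \<in> carrier_vec (card C)" and xb: "xb \<in> carrier_vec (card B)" unfolding xb_def xc_def by simp_all
      have xe: "x = xc @\<^sub>v xb" unfolding xb_def xc_def by (rule vec_first_last_append[OF x(1), symmetric])
      have z: "0\<^sub>v (card A) \<in> carrier_vec (card A)" by simp
      have fq: "x \<bullet> (?F2 *\<^sub>v x) = xc \<bullet> (?CC *\<^sub>v xc) + xc \<bullet> (?CB *\<^sub>v xb) + (xb \<bullet> (?BC *\<^sub>v xc) + xb \<bullet> (?BB *\<^sub>v xb))"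
        unfolding xe by (rule fb_quad[OF cCC cCB cBC cBB xc xb])
      define v where "v = ?SA *\<^sub>v 0\<^sub>v (card A) + ?SB *\<^sub>v xb + ?SC *\<^sub>v xc"
      have qv: "v \<bullet> (M *\<^sub>v v) = 0\<^sub>v (card A) \<bullet> (?AA *\<^sub>v 0\<^sub>v (card A)) + xb \<bullet> (?BB *\<^sub>v xb) + xc \<bullet> (?CC *\<^sub>v xc)
         + 2 * (0\<^sub>v (card A) \<bullet> (?AC *\<^sub>v xc)) + 2 * (xb \<bullet> (?BC *\<^sub>v xc))"
        unfolding v_def by (rule QF[OF z xb xc])
      have z1: "0\<^sub>v (card A) \<bullet> (?AA *\<^sub>v 0\<^sub>v (card A)) = 0" by (rule scalar_prod_left_zero) (use cAA in simp)
      have z2: "0\<^sub>v (card A) \<bullet> (?AC *\<^sub>v xc) = 0" by (rule scalar_prod_left_zero) (use cAC xc in simp)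
      have fl: "xc \<bullet> (?CB *\<^sub>v xb) = xb \<bullet> (?BC *\<^sub>v xc)" by (rule flipBC[OF xb xc])
      have "v \<noteq> 0\<^sub>v n"
      proof
        assume "v = 0\<^sub>v n"
        hence "xb = 0\<^sub>v (card B) \<and> xc = 0\<^sub>v (card C)" using vzero[OF z xb xc] unfolding v_def by blast
        hence "x = 0\<^sub>v (card C + card B)" unfolding xe using append_zero_iff[OF xc xb] by blast
        thus False using x(2) by contradiction
      qed
      moreover have "v \<in> carrier_vec n" unfolding v_def by simp
      ultimately have "v \<bullet> (M *\<^sub>v v) > 0" using posM by blast
      thus "x \<bullet> (?F2 *\<^sub>v x) > 0" using fq qv z1 z2 fl by linarith
    qed
    have "pos_def ?T" using E2 pdM by blast
    thus "pos_def ?F1 \<and> pos_def ?F2 \<and> pos_def ?T" using pF1 pF2 by blast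
  next
    assume h: "pos_def ?F1 \<and> pos_def ?F2 \<and> pos_def ?T"
    have posF1: "\<forall>v \<in> carrier_vec (card A + card C). v \<noteq> 0\<^sub>v (card A + card C) \<longrightarrow> v \<bullet> (?F1 *\<^sub>v v) > 0"
      using h unfolding pos_def_def dF1 by blast
    have posF2: "\<forall>v \<in> carrier_vec (card C + card B). v \<noteq> 0\<^sub>v (card C + card B) \<longrightarrow> v \<bullet> (?F2 *\<^sub>v v) > 0"
      using h unfolding pos_def_def dF2 by blast
    have dAA: "dim_row ?AA = card A" using cAA by auto
    have dBB: "dim_row ?BB = card B" using cBB by auto
    have pAA: "pos_def ?AA" unfolding pos_def_def dAA
    proof (intro conjI ballI impI)
      show "?AA \<in> carrier_mat (card A) (card A)" by (rule cAA)
      show "transpose_mat ?AA = ?AA" by (rule tAA)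
      fix xa :: "real vec" assume xa: "xa \<in> carrier_vec (card A)" "xa \<noteq> 0\<^sub>v (card A)"
      have z: "0\<^sub>v (card C) \<in> carrier_vec (card C)" by simp
      have xc: "xa @\<^sub>v 0\<^sub>v (card C) \<in> carrier_vec (card A + card C)" using xa(1) by simp
      have nz: "xa @\<^sub>v 0\<^sub>v (card C) \<noteq> 0\<^sub>v (card A + card C)" using append_zero_iff[OF xa(1) z] xa(2) by blast
      have fq: "(xa @\<^sub>v 0\<^sub>v (card C)) \<bullet> (?F1 *\<^sub>v (xa @\<^sub>v 0\<^sub>v (card C))) = xa \<bullet> (?AA *\<^sub>v xa) + xa \<bullet> (?AC *\<^sub>v 0\<^sub>v (card C))
          + (0\<^sub>v (card C) \<bullet> (?CA *\<^sub>v xa) + 0\<^sub>v (card C) \<bullet> (?CC *\<^sub>v 0\<^sub>v (card C)))"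
        by (rule fb_quad[OF cAA cAC cCA cCC xa(1) z])
      have z1: "xa \<bullet> (?AC *\<^sub>v 0\<^sub>v (card C)) = 0" unfolding mat_zero_vec[OF cAC] by (rule scalar_prod_right_zero[OF xa(1)])
      have z2: "0\<^sub>v (card C) \<bullet> (?CA *\<^sub>v xa) = 0" by (rule scalar_prod_left_zero) (use cCA xa in simp)
      have z3: "0\<^sub>v (card C) \<bullet> (?CC *\<^sub>v 0\<^sub>v (card C)) = 0" by (rule scalar_prod_left_zero) (use cCC in simp)
      have "(xa @\<^sub>v 0\<^sub>v (card C)) \<bullet> (?F1 *\<^sub>v (xa @\<^sub>v 0\<^sub>v (card C))) > 0" using posF1 xc nz by blast
      thus "xa \<bullet> (?AA *\<^sub>v xa) > 0" using fq z1 z2 z3 by linarith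
    qed
    have pBB: "pos_def ?BB" unfolding pos_def_def dBB
    proof (intro conjI ballI impI)
      show "?BB \<in> carrier_mat (card B) (card B)" by (rule cBB)
      show "transpose_mat ?BB = ?BB" by (rule tBB)
      fix xb :: "real vec" assume xb: "xb \<in> carrier_vec (card B)" "xb \<noteq> 0\<^sub>v (card B)"
      have z: "0\<^sub>v (card C) \<in> carrier_vec (card C)" by simp
      have xc: "0\<^sub>v (card C) @\<^sub>v xb \<in> carrier_vec (card C + card B)" using xb(1) by simp
      have nz: "0\<^sub>v (card C) @\<^sub>v xb \<noteq> 0\<^sub>v (card C + card B)" using append_zero_iff[OF z xb(1)] xb(2) by blast
      have fq: "(0\<^sub>v (card C) @\<^sub>v xb) \<bullet> (?F2 *\<^sub>v (0\<^sub>v (card C) @\<^sub>v xb)) = 0\<^sub>v (card C) \<bullet> (?CC *\<^sub>v 0\<^sub>v (card C)) + 0\<^sub>v (card C) \<bullet> (?CB *\<^sub>v xb)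
          + (xb \<bullet> (?BC *\<^sub>v 0\<^sub>v (card C)) + xb \<bullet> (?BB *\<^sub>v xb))"
        by (rule fb_quad[OF cCC cCB cBC cBB z xb(1)])
      have z1: "xb \<bullet> (?BC *\<^sub>v 0\<^sub>v (card C)) = 0" unfolding mat_zero_vec[OF cBC] by (rule scalar_prod_right_zero[OF xb(1)])
      have z2: "0\<^sub>v (card C) \<bullet> (?CB *\<^sub>v xb) = 0" by (rule scalar_prod_left_zero) (use cCB xb in simp)
      have z3: "0\<^sub>v (card C) \<bullet> (?CC *\<^sub>v 0\<^sub>v (card C)) = 0" by (rule scalar_prod_left_zero) (use cCC in simp)
      have "(0\<^sub>v (card C) @\<^sub>v xb) \<bullet> (?F2 *\<^sub>v (0\<^sub>v (card C) @\<^sub>v xb)) > 0" using posF2 xc nz by blast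
      thus "xb \<bullet> (?BB *\<^sub>v xb) > 0" using fq z1 z2 z3 by linarith
    qed
    show "pos_def M" using E2 pAA pBB h by blast
  qed
  show ?thesis using E1 E2 by blast
qed

end
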